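(* Let $\alpha>0$, $A\ge0$, $B>0$, $t>0$, and let $P_n(x,t)$ be the monic polynomials orthogonal on $[0,\infty)$ w.r.t. $w(x,t)=x^\alpha e^{-x}(A+B\theta(x-t))$, with norms $h_n(t)$ and recurrence $zP_n=P_{n+1}+\alpha_nP_n+\beta_nP_{n-1}$, $\beta_n=h_n/h_{n-1}$. Let $R_n(t)=Bt^\alpha e^{-t}\{P_n(t,t)\}^2/h_n(t)$ and $r_n(t)=Bt^\alpha e^{-t}P_n(t,t)P_{n-1}(t,t)/h_{n-1}(t)$. Then for fixed $t$ and $n\ge1$: $$r_n^2=\beta_nR_nR_{n-1},$$ $$(n+r_n)(n+\alpha+r_n)=\beta_n(1-R_n)(1-R_{n-1}),$$ $$\sum_{j=0}^{n-1}R_j+r_n\left[1-\frac{\alpha}{t}-\frac{2(n+r_n)}{t}\right]=\frac{\beta_n}{t}\left[(1-R_n)R_{n-1}+(1-R_{n-1})R_n\right].$$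
   Context: $\theta$ is the Heaviside function ($1$ for $x>0$, $0$ otherwise); $P_n(t,t)$ is $P_n(x,t)$ at $x=t$. *)

theory Defs
  imports "HOL-Analysis.Analysis" "HOL-Computational_Algebra.Polynomial"
begin

definition heaviside :: "real \<Rightarrow> real" where
  "heaviside x = (if x > 0 then 1 else 0)"

definition jw :: "real \<Rightarrow> real \<Rightarrow> real \<Rightarrow> real \<Rightarrow> real \<Rightarrow> real" where
  "jw \<alpha> A B t x = x powr \<alpha> * exp (- x) * (A + B * heaviside (x - t))"

definition monic_OP :: "(real \<Rightarrow> real) \<Rightarrow> (nat \<Rightarrow> real poly) \<Rightarrow> bool" where
  "monic_OP w P \<longleftrightarrow>
     (\<forall>n. degree (P n) = n \<and> lead_coeff (P n) = 1) \<and>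
     (\<forall>m n. m \<noteq> n \<longrightarrow>
        (\<integral>x\<in>{0..}. poly (P m) x * poly (P n) x * w x \<partial>lborel) = 0)"

definition hnorm :: "(real \<Rightarrow> real) \<Rightarrow> (nat \<Rightarrow> real poly) \<Rightarrow> nat \<Rightarrow> real" where
  "hnorm w P n = (\<integral>x\<in>{0..}. (poly (P n) x)\<^sup>2 * w x \<partial>lborel)"

end

theory Submission
  imports Defs "HOL-Real_Asymp.Real_Asymp"
begin



lemma set_integrable_sum':
  fixes f :: "nat \<Rightarrow> real \<Rightarrow> real"
  assumes "\<And>i. i \<in> I \<Longrightarrow> set_integrable M S (f i)" "finite I"
  shows "set_integrable M S (\<lambda>x. \<Sum>i\<in>I. f i x)"
  using assms(2,1) proof (induction I rule: finite_induct)
  case empty then show ?case by (simp add: set_integrable_def)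
qed auto

lemma int_base:
  fixes s :: real assumes "s \<ge> 0"
  shows "set_integrable lborel {0..} (\<lambda>x::real. x powr s * exp (- x))"
proof -
  have "(\<lambda>x. x powr s / exp x) integrable_on {0..}"
    using Gamma_integral_real[of "s+1"] assms by (auto intro: has_integral_integrable)
  hence "(\<lambda>x::real. x powr s * exp (- x)) integrable_on {0..}"
    by (simp add: exp_minus divide_inverse)
  hence "(\<lambda>x::real. x powr s * exp (- x)) absolutely_integrable_on {0..}"
    by (rule nonnegative_absolutely_integrable_1) simp
  thus ?thesis unfolding set_integrable_def
    by (subst (asm) integrable_completion) auto
qed

lemma int_poly:
  fixes \<alpha> :: real assumes "\<alpha> > 0"
  shows "set_integrable lborel {0..} (\<lambda>x. poly p x * (x powr \<alpha> * exp (- x)))"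
proof -
  have "set_integrable lborel {0..} (\<lambda>x. \<Sum>i\<le>degree p. coeff p i * (x powr (\<alpha> + real i) * exp (- x)))"
    by (intro set_integrable_sum' set_integrable_mult_right int_base) (use assms in auto)
  moreover have "poly p x * (x powr \<alpha> * exp (- x)) = (\<Sum>i\<le>degree p. coeff p i * (x powr (\<alpha> + real i) * exp (- x)))"
    if "x \<in> {0..}" for x
  proof (cases "x = 0")
    case True then show ?thesis by simp
  next
    case False
    with that have "x > 0" by auto
    then show ?thesis
      by (simp add: poly_altdef sum_distrib_left sum_distrib_right powr_add powr_realpow mult_ac)
  qed
  ultimately show ?thesis
    by (subst set_integrable_cong[OF refl refl]) auto
qed


definition wb :: "real \<Rightarrow> real \<Rightarrow> real" where
  "wb \<alpha> x = x powr \<alpha> * exp (- x)"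

definition Fp :: "real \<Rightarrow> real poly \<Rightarrow> real poly" where
  "Fp \<alpha> f = smult (\<alpha> + 1) f + [:0,1:] * pderiv f - [:0,1:] * f"

lemma G_deriv:
  assumes "x > 0"
  shows "((\<lambda>x. x powr (\<alpha>+1) * exp (- x) * poly f x) has_real_derivative
            wb \<alpha> x * poly (Fp \<alpha> f) x) (at x)"
proof -
  have "((\<lambda>x. x powr (\<alpha>+1) * exp (- x) * poly f x) has_real_derivative
     ((\<alpha>+1) * x powr (\<alpha> + 1 - 1) * exp (- x) + x powr (\<alpha>+1) * (exp (- x) * (- 1))) * poly f x
       + x powr (\<alpha>+1) * exp (- x) * poly (pderiv f) x) (at x)"
    by (intro derivative_eq_intros has_real_derivative_powr assms poly_DERIV) auto
  moreover have "((\<alpha>+1) * x powr (\<alpha> + 1 - 1) * exp (- x) + x powr (\<alpha>+1) * (exp (- x) * (- 1))) * poly f x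
       + x powr (\<alpha>+1) * exp (- x) * poly (pderiv f) x = wb \<alpha> x * poly (Fp \<alpha> f) x"
    using assms by (simp add: wb_def Fp_def powr_add algebra_simps)
  ultimately show ?thesis by simp
qed

lemma wbF_cont: "x > 0 \<Longrightarrow> isCont (\<lambda>x. wb \<alpha> x * poly (Fp \<alpha> f) x) x"
  unfolding wb_def by (intro continuous_intros) auto

lemma int_wbF: "\<alpha> > 0 \<Longrightarrow> set_integrable lborel {0..} (\<lambda>x. wb \<alpha> x * poly p x)"
  using int_poly[of \<alpha> p] by (simp add: wb_def mult_ac)

lemma ftc_tail:
  assumes "\<alpha> > 0" "a \<ge> 0"
  shows "(LINT x:{a<..}|lborel. wb \<alpha> x * poly (Fp \<alpha> f) x) = - (a powr (\<alpha>+1) * exp (- a) * poly f a)"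
proof -
  let ?G = "\<lambda>x. x powr (\<alpha>+1) * exp (- x) * poly f x"
  have int: "set_integrable lborel (einterval (ereal a) \<infinity>) (\<lambda>x. wb \<alpha> x * poly (Fp \<alpha> f) x)"
  proof -
    have sub: "{a<..} \<subseteq> {0::real..}" using assms by auto
    show ?thesis using set_integrable_subset[OF int_wbF[OF assms(1), of "Fp \<alpha> f"] _ sub] by simp
  qed
  have lim_top: "(?G \<longlongrightarrow> 0) at_top"
  proof -
    have "((\<lambda>x. \<Sum>i\<le>degree f. coeff f i * (x powr (\<alpha> + 1 + real i) * exp (- x))) \<longlongrightarrow> (\<Sum>i\<le>degree f. coeff f i * 0)) at_top"
      by (intro tendsto_sum tendsto_mult tendsto_const) real_asymp
    moreover have "eventually (\<lambda>x. (\<Sum>i\<le>degree f. coeff f i * (x powr (\<alpha> + 1 + real i) * exp (- x))) = ?G x) at_top"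
      using eventually_gt_at_top[of 0]
      by eventually_elim (simp add: poly_altdef sum_distrib_left sum_distrib_right powr_add powr_realpow mult_ac)
    ultimately show ?thesis by (simp add: tendsto_cong)
  qed
  have lim_a: "(?G \<longlongrightarrow> ?G a) (at_right a)"
  proof (cases "a = 0")
    case True
    have "((\<lambda>x. x powr (\<alpha>+1)) \<longlongrightarrow> 0) (at_right 0)"
      by (rule tendsto_zero_powrI[where b="\<alpha>+1"]) (use assms in \<open>auto intro: tendsto_intros eventually_at_rightI[of 0 1]\<close>)
    hence "(?G \<longlongrightarrow> 0 * exp (- 0) * poly f 0) (at_right 0)"
      by (intro tendsto_intros) auto
    thus ?thesis using True by simp
  next
    case False
    hence "isCont ?G a" using assms by (intro continuous_intros) auto
    thus ?thesis by (simp add: isCont_def filterlim_at_split)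
  qed
  have "(LBINT x=ereal a..\<infinity>. wb \<alpha> x * poly (Fp \<alpha> f) x) = 0 - ?G a"
  proof (rule interval_integral_FTC_integrable[where F = ?G])
    fix x assume "ereal a < ereal x" "ereal x < \<infinity>"
    hence "x > 0" using assms by auto
    thus "(?G has_vector_derivative wb \<alpha> x * poly (Fp \<alpha> f) x) (at x)"
      using G_deriv by (simp add: has_real_derivative_iff_has_vector_derivative)
    show "isCont (\<lambda>x. wb \<alpha> x * poly (Fp \<alpha> f) x) x" using \<open>x > 0\<close> by (rule wbF_cont)
  next
    show "((?G \<circ> real_of_ereal) \<longlongrightarrow> ?G a) (at_right (ereal a))"
      using lim_a by (simp add: ereal_tendsto_simps1)
    show "((?G \<circ> real_of_ereal) \<longlongrightarrow> 0) (at_left \<infinity>)"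
      using lim_top by (simp add: ereal_tendsto_simps1)
  qed (use int in auto)
  thus ?thesis by (simp add: interval_lebesgue_integral_def)
qed


definition Lp :: "real \<Rightarrow> real \<Rightarrow> real \<Rightarrow> real \<Rightarrow> real poly \<Rightarrow> real" where
  "Lp \<alpha> A B t p = (\<integral>x\<in>{0..}. poly p x * jw \<alpha> A B t x \<partial>lborel)"

lemma jw_eq: "poly p x * jw \<alpha> A B t x = A * (wb \<alpha> x * poly p x) + B * (indicator {t<..} x * (wb \<alpha> x * poly p x))"
  by (simp add: jw_def wb_def heaviside_def indicator_def algebra_simps)

lemma set_int_ind:
  fixes g :: "real \<Rightarrow> real"
  assumes "set_integrable M S g" "T \<in> sets M"
  shows "set_integrable M S (\<lambda>x. indicator T x * g x)"
    "(LINT x:S|M. indicator T x * g x) = (LINT x:(S \<inter> T)|M. g x)"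
proof -
  have "integrable M (\<lambda>x. indicator T x *\<^sub>R (indicator S x *\<^sub>R g x))"
    using integrable_mult_indicator[OF assms(2)] assms(1) unfolding set_integrable_def by blast
  moreover have "(\<lambda>x. indicator T x *\<^sub>R (indicator S x *\<^sub>R g x)) = (\<lambda>x. indicator S x *\<^sub>R (indicator T x * g x))"
    by (simp add: mult_ac)
  ultimately show "set_integrable M S (\<lambda>x. indicator T x * g x)" unfolding set_integrable_def by simp
  show "(LINT x:S|M. indicator T x * g x) = (LINT x:(S \<inter> T)|M. g x)"
    unfolding set_lebesgue_integral_def by (simp add: indicator_inter_arith mult_ac)
qed

lemma int_jw:
  assumes "\<alpha> > 0"
  shows "set_integrable lborel {0..} (\<lambda>x. poly p x * jw \<alpha> A B t x)"
proof -
  have "set_integrable lborel {0..} (\<lambda>x. A * (wb \<alpha> x * poly p x) + B * (indicator {t<..} x * (wb \<alpha> x * poly p x)))"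
    by (intro set_integral_add set_integrable_mult_right set_int_ind int_wbF assms) auto
  thus ?thesis by (simp only: jw_eq)
qed

lemma Lp_split:
  assumes "\<alpha> > 0"
  shows "Lp \<alpha> A B t p = A * (LINT x:{0..}|lborel. wb \<alpha> x * poly p x) + B * (LINT x:({0..} \<inter> {t<..})|lborel. wb \<alpha> x * poly p x)"
proof -
  have "Lp \<alpha> A B t p = (LINT x:{0..}|lborel. A * (wb \<alpha> x * poly p x) + B * (indicator {t<..} x * (wb \<alpha> x * poly p x)))"
    unfolding Lp_def by (simp only: jw_eq)
  also have "\<dots> = A * (LINT x:{0..}|lborel. wb \<alpha> x * poly p x) + B * (LINT x:{0..}|lborel. indicator {t<..} x * (wb \<alpha> x * poly p x))"
    by (subst set_integral_add(2)) (auto intro!: set_integrable_mult_right set_int_ind int_wbF assms)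
  also have "(LINT x:{0..}|lborel. indicator {t<..} x * (wb \<alpha> x * poly p x)) = (LINT x:({0..} \<inter> {t<..})|lborel. wb \<alpha> x * poly p x)"
    by (rule set_int_ind(2)[OF int_wbF[OF assms]]) auto
  finally show ?thesis .
qed

lemma Lp_Fp:
  assumes "\<alpha> > 0" "t > 0"
  shows "Lp \<alpha> A B t (Fp \<alpha> f) = - (B * t powr \<alpha> * exp (- t) * t * poly f t)"
proof -
  have "(LINT x:{0..}|lborel. wb \<alpha> x * poly (Fp \<alpha> f) x) = (LINT x:{0<..}|lborel. wb \<alpha> x * poly (Fp \<alpha> f) x)"
    unfolding set_lebesgue_integral_def
    by (intro arg_cong[where f="integral\<^sup>L lborel"] ext) (auto simp: indicator_def wb_def)
  also have "\<dots> = 0" using ftc_tail[OF assms(1), of 0 f] assms by simp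
  finally have 1: "(LINT x:{0..}|lborel. wb \<alpha> x * poly (Fp \<alpha> f) x) = 0" .
  have "{0..} \<inter> {t<..} = {t<..}" using assms by auto
  hence 2: "(LINT x:({0..} \<inter> {t<..})|lborel. wb \<alpha> x * poly (Fp \<alpha> f) x) = - (t powr (\<alpha>+1) * exp (- t) * poly f t)"
    using ftc_tail[OF assms(1), of t f] assms by simp
  show ?thesis using assms by (simp add: Lp_split 1 2 powr_add)
qed

lemma Lp_add: "\<alpha> > 0 \<Longrightarrow> Lp \<alpha> A B t (p + q) = Lp \<alpha> A B t p + Lp \<alpha> A B t q"
  unfolding Lp_def by (simp add: distrib_right set_integral_add(2)[OF int_jw int_jw])

lemma Lp_diff: "\<alpha> > 0 \<Longrightarrow> Lp \<alpha> A B t (p - q) = Lp \<alpha> A B t p - Lp \<alpha> A B t q"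
  unfolding Lp_def by (simp add: left_diff_distrib set_integral_diff(2)[OF int_jw int_jw])

lemma Lp_smult: "Lp \<alpha> A B t (smult c p) = c * Lp \<alpha> A B t p"
  unfolding Lp_def by (simp add: mult.assoc)

lemma Lp_0: "Lp \<alpha> A B t 0 = 0"
  unfolding Lp_def by simp

lemma Lp_minus: "Lp \<alpha> A B t (- p) = - Lp \<alpha> A B t p"
  using Lp_smult[of \<alpha> A B t "-1" p] by simp


lemma jw_nonneg: "A \<ge> 0 \<Longrightarrow> B > 0 \<Longrightarrow> jw \<alpha> A B t x \<ge> 0"
  unfolding jw_def heaviside_def by (auto intro!: mult_nonneg_nonneg)

lemma Lp_sq_pos:
  assumes "\<alpha> > 0" "A \<ge> 0" "B > 0" "t > 0" "q \<noteq> 0"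
  shows "Lp \<alpha> A B t (q * q) > 0"
proof -
  let ?f = "\<lambda>x. indicator {0..} x *\<^sub>R (poly (q*q) x * jw \<alpha> A B t x)"
  have intf: "integrable lborel ?f" using int_jw[OF assms(1)] unfolding set_integrable_def by blast
  have nn: "\<And>x. 0 \<le> ?f x" using jw_nonneg[OF assms(2,3)] by (auto simp: indicator_def)
  have ge: "Lp \<alpha> A B t (q * q) \<ge> 0"
    unfolding Lp_def set_lebesgue_integral_def by (rule Bochner_Integration.integral_nonneg) (use nn in auto)
  have "Lp \<alpha> A B t (q * q) \<noteq> 0"
  proof
    assume "Lp \<alpha> A B t (q * q) = 0"
    hence "integral\<^sup>L lborel ?f = 0" unfolding Lp_def set_lebesgue_integral_def .
    hence AE0: "AE x in lborel. ?f x = 0"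
      using integral_nonneg_eq_0_iff_AE[OF intf] nn by auto
    define Z where "Z = {x. poly q x = 0}"
    have finZ: "finite Z" unfolding Z_def using poly_roots_finite[OF assms(5)] .
    define S where "S = {t<..<t+1} - Z"
    have Ssets: "S \<in> sets lborel" unfolding S_def
      using null_setsD2[OF finite_imp_null_set_lborel[OF finZ]] by (intro sets.Diff) auto
    have pos: "?f x > 0" if "x \<in> S" for x
    proof -
      from that have x: "t < x" "poly q x \<noteq> 0" by (auto simp: S_def Z_def)
      hence "jw \<alpha> A B t x > 0" using assms
        by (auto simp: jw_def heaviside_def intro!: mult_pos_pos add_nonneg_pos)
      moreover have "poly (q*q) x > 0" using x by (simp add: zero_less_mult_iff) linarith
      ultimately show ?thesis using x assms by (simp add: indicator_def)
    qed
    have "AE x in lborel. x \<notin> S" using AE0 by eventually_elim (use pos in force)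
    hence "S \<in> null_sets lborel" using AE_iff_null_sets[OF Ssets] by simp
    moreover have "Z \<in> null_sets lborel" using finZ by (rule finite_imp_null_set_lborel)
    ultimately have "S \<union> Z \<in> null_sets lborel" by blast
    hence "{t<..<t+1} \<in> null_sets lborel"
      by (rule null_sets_subset) (auto simp: S_def)
    hence "emeasure lborel {t<..<t+1} = 0" by auto
    thus False by simp
  qed
  with ge show ?thesis by simp
qed




lemma X_mult: "[:0,1:] * p = pCons 0 (p::real poly)"
  by simp

lemma deg_lt_helper:
  fixes q :: "real poly"
  assumes "degree q \<le> n" "coeff q n = 0"
  shows "q = 0 \<or> degree q < n"
proof (cases "q = 0")
  case False
  hence "coeff q (degree q) \<noteq> 0" by simp
  with assms have "degree q \<noteq> n" by auto
  with assms show ?thesis by auto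
qed simp

locale OPS =
  fixes \<alpha> A B t :: real and P :: "nat \<Rightarrow> real poly"
  assumes apos: "\<alpha> > 0" and Anonneg: "A \<ge> 0" and Bpos: "B > 0" and tpos: "t > 0"
    and degP: "\<And>n. degree (P n) = n" and leadP: "\<And>n. lead_coeff (P n) = 1"
    and orth: "\<And>m n. m \<noteq> n \<Longrightarrow> Lp \<alpha> A B t (P m * P n) = 0"
begin

definition ip where "ip p q = Lp \<alpha> A B t (p * q)"

lemma ip_add_left: "ip (p + q) r = ip p r + ip q r"
  unfolding ip_def by (simp add: distrib_right Lp_add[OF apos])
lemma ip_add_right: "ip r (p + q) = ip r p + ip r q"
  unfolding ip_def by (simp add: distrib_left Lp_add[OF apos])
lemma ip_diff_left: "ip (p - q) r = ip p r - ip q r"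
  unfolding ip_def by (simp add: left_diff_distrib Lp_diff[OF apos])
lemma ip_diff_right: "ip r (p - q) = ip r p - ip r q"
  unfolding ip_def by (simp add: right_diff_distrib Lp_diff[OF apos])
lemma ip_smult_left: "ip (smult c p) q = c * ip p q"
  unfolding ip_def by (simp add: Lp_smult)
lemma ip_smult_right: "ip q (smult c p) = c * ip q p"
  unfolding ip_def by (simp add: Lp_smult)
lemma ip_comm: "ip p q = ip q p"
  unfolding ip_def by (simp add: mult.commute)
lemma ip_zero_left[simp]: "ip 0 q = 0" and ip_zero_right[simp]: "ip q 0 = 0"
  unfolding ip_def by (simp_all add: Lp_0)
lemma ip_X: "ip (pCons 0 p) q = ip p (pCons 0 q)"
  unfolding ip_def by (metis mult_pCons_left mult_pCons_right smult_0_left add_0 mult.assoc)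

lemmas ip_lin = ip_add_left ip_add_right ip_diff_left ip_diff_right ip_smult_left ip_smult_right

lemma span:
  assumes "\<And>j. j < N \<Longrightarrow> ip s (P j) = 0" "degree p < N"
  shows "ip s p = 0"
  using assms(2)
proof (induction "degree p" arbitrary: p rule: less_induct)
  case less
  show ?case
  proof (cases "p = 0")
    case False
    define d where "d = degree p"
    define p' where "p' = p - smult (lead_coeff p) (P d)"
    have p: "p = p' + smult (lead_coeff p) (P d)" unfolding p'_def by simp
    have "degree p' \<le> d" unfolding p'_def d_def
      by (intro degree_diff_le) (auto simp: degP)
    moreover have "coeff p' d = 0" unfolding p'_def d_def using leadP[of "degree p"] degP[of "degree p"] by simp
    ultimately have "p' = 0 \<or> degree p' < d" by (rule deg_lt_helper)
    moreover have "ip s (P d) = 0" using less.prems assms(1) unfolding d_def by auto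
    moreover have "ip s p' = 0" if "degree p' < d"
      using less.hyps[of p'] that less.prems unfolding d_def by auto
    ultimately show ?thesis by (subst p) (auto simp: ip_lin)
  qed simp
qed

lemma orth_low: "q = 0 \<or> degree q < n \<Longrightarrow> ip (P n) q = 0"
  using span[of n "P n" q] orth unfolding ip_def by (auto simp: Lp_0)

definition h where "h n = ip (P n) (P n)"

lemma P_nz: "P n \<noteq> 0"
  using leadP[of n] by auto

lemma h_pos: "h n > 0"
  unfolding h_def ip_def by (rule Lp_sq_pos[OF apos Anonneg Bpos tpos P_nz])

lemma ip_orth: "m \<noteq> n \<Longrightarrow> ip (P m) (P n) = 0"
  unfolding ip_def by (rule orth)

end



context OPS begin

definition a where "a n = ip (pCons 0 (P n)) (P n) / h n"
definition b where "b n = (if n = 0 then 0 else h n / h (n - 1))"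
definition E where "E n = ip (P (n - 1)) (pCons 0 (pderiv (P n)))"
definition c where "c = B * t powr \<alpha> * exp (- t)"

lemma deg_pCons0_pderiv: "degree (pCons 0 (pderiv p)) \<le> degree (p :: real poly)"
proof (cases "degree p = 0")
  case True
  hence "pderiv p = 0" by (simp add: pderiv_eq_0_iff)
  thus ?thesis by simp
next
  case False
  thus ?thesis using degree_pCons_le[of 0 "pderiv p"] by (simp add: degree_pderiv)
qed

lemma K1: "ip (P n) (pCons 0 (pderiv (P n))) = real n * h n"
proof -
  define q where "q = pCons 0 (pderiv (P n)) - smult (real n) (P n)"
  have "degree q \<le> n" unfolding q_def
    using deg_pCons0_pderiv[of "P n"] by (intro degree_diff_le) (auto simp: degP)
  moreover have "coeff q n = 0"
  proof (cases n)
    case 0 thus ?thesis by (simp add: q_def)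
  next
    case (Suc k)
    thus ?thesis using leadP[of n] degP[of n] by (simp add: q_def coeff_pderiv)
  qed
  ultimately have "ip (P n) q = 0" by (intro orth_low deg_lt_helper)
  hence "ip (P n) (pCons 0 (pderiv (P n))) = ip (P n) (smult (real n) (P n))"
    unfolding q_def by (simp add: ip_lin)
  thus ?thesis by (simp add: ip_lin h_def)
qed

lemma K2: "ip (P (Suc m)) (pCons 0 (P m)) = h (Suc m)"
proof -
  define q where "q = pCons 0 (P m) - P (Suc m)"
  have "degree q \<le> Suc m" unfolding q_def
    using degree_pCons_le[of 0 "P m"] by (intro degree_diff_le) (auto simp: degP)
  moreover have "coeff q (Suc m) = 0"
    using leadP[of m] degP[of m] leadP[of "Suc m"] degP[of "Suc m"] by (simp add: q_def)
  ultimately have "ip (P (Suc m)) q = 0" by (intro orth_low deg_lt_helper)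
  thus ?thesis unfolding q_def by (simp add: ip_lin h_def)
qed

lemma K4: "m < n \<Longrightarrow> ip (P n) (pCons 0 (pderiv (P m))) = 0"
  using deg_pCons0_pderiv[of "P m"] degP[of m] by (intro orth_low) auto

lemma K5: "Suc m < n \<Longrightarrow> ip (P n) (pCons 0 (P m)) = 0"
  using degree_pCons_le[of 0 "P m"] degP[of m] by (intro orth_low) auto

lemma ip_sq_pos: "q \<noteq> 0 \<Longrightarrow> ip q q > 0"
  unfolding ip_def by (rule Lp_sq_pos[OF apos Anonneg Bpos tpos])

lemma recur: "pCons 0 (P n) = P (Suc n) + smult (a n) (P n) + smult (b n) (P (n - 1))"
proof -
  define s where "s = pCons 0 (P n) - P (Suc n) - smult (a n) (P n) - smult (b n) (P (n - 1))"
  have "degree s \<le> Suc n" unfolding s_def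
    using degree_pCons_le[of 0 "P n"] degP[of n] degP[of "n-1"] degP[of "Suc n"]
    by (intro degree_diff_le) (auto intro: order.trans[OF degree_smult_le])
  moreover have "coeff s (Suc n) = 0"
    using leadP[of n] degP[of n] leadP[of "Suc n"] degP[of "Suc n"] degP[of "n - 1"]
    by (simp add: s_def coeff_eq_0)
  ultimately have sd: "s = 0 \<or> degree s < Suc n" by (rule deg_lt_helper)
  have oa: "ip s (P j) = 0" if "j < Suc n" for j
  proof -
    have hn: "h n > 0" "h j > 0" by (rule h_pos)+
    have e: "ip s (P j) = ip (pCons 0 (P n)) (P j) - ip (P (Suc n)) (P j) - a n * ip (P n) (P j)
                 - b n * ip (P (n-1)) (P j)" unfolding s_def by (simp add: ip_lin)
    have "j = n \<or> Suc j = n \<or> Suc j < n" using that by arith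
    then consider "j = n" | "Suc j = n" | "Suc j < n" by blast
    thus ?thesis
    proof cases
      case 1
      have t1: "ip (pCons 0 (P n)) (P n) = a n * h n" using hn by (simp add: a_def)
      have t2: "ip (P (Suc n)) (P n) = 0" by (simp add: ip_orth)
      have t3: "b n * ip (P (n-1)) (P n) = 0" by (cases n) (simp_all add: b_def ip_orth)
      show ?thesis using e t1 t2 t3 1 by (simp add: h_def)
    next
      case 2
      have t1: "ip (pCons 0 (P n)) (P j) = h n" using K2[of j] 2 by (simp add: ip_X)
      have t2: "ip (P (Suc n)) (P j) = 0" "ip (P n) (P j) = 0" using 2 by (simp_all add: ip_orth)
      have t3: "b n * ip (P (n-1)) (P j) = h n" using 2 hn by (auto simp: b_def h_def)
      show ?thesis unfolding e t1 t2 t3 by simp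
    next
      case 3
      have t1: "ip (pCons 0 (P n)) (P j) = 0" using K5[of j n] 3 by (simp add: ip_X)
      have t2: "ip (P (Suc n)) (P j) = 0" "ip (P n) (P j) = 0" "ip (P (n-1)) (P j) = 0"
        using 3 by (simp_all add: ip_orth)
      show ?thesis unfolding e t1 t2 by simp
    qed
  qed
  have dg: "degree s < Suc n" using sd by auto
  have "ip s s = 0" by (rule span[OF oa dg])
  hence "s = 0" using ip_sq_pos[of s] by force
  thus ?thesis unfolding s_def by (simp add: algebra_simps)
qed

end



context OPS begin

lemma Fp_mult: "Fp \<alpha> (p * q) = smult (\<alpha>+1) (p * q) + p * pCons 0 (pderiv q) + q * pCons 0 (pderiv p) - pCons 0 p * q"
  by (simp add: Fp_def pderiv_mult algebra_simps)

lemma IBP2: "(\<alpha>+1) * ip p q + ip p (pCons 0 (pderiv q)) + ip q (pCons 0 (pderiv p)) - ip (pCons 0 p) q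
    = - (c * t * poly p t * poly q t)"
proof -
  have "Lp \<alpha> A B t (Fp \<alpha> (p * q)) = (\<alpha>+1) * ip p q + ip p (pCons 0 (pderiv q)) + ip q (pCons 0 (pderiv p)) - ip (pCons 0 p) q"
    unfolding Fp_mult ip_def by (simp add: Lp_add[OF apos] Lp_diff[OF apos] Lp_smult)
  thus ?thesis using Lp_Fp[OF apos tpos, of A B "p*q"] by (simp add: c_def mult_ac)
qed

lemma a_eq: "a n = 2 * real n + 1 + \<alpha> + t * (c * (poly (P n) t)^2 / h n)"
proof -
  have hn: "h n > 0" by (rule h_pos)
  have "(\<alpha>+1) * h n + 2 * (real n * h n) - a n * h n = - (c * t * (poly (P n) t)^2)"
    using IBP2[of "P n" "P n"] hn by (simp add: K1 h_def[symmetric] a_def ip_comm[of "pCons 0 _"] power2_eq_square)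
  thus ?thesis using hn by (simp add: field_simps)
qed

lemma E_eq: "E (Suc m) = h (Suc m) - c * t * poly (P (Suc m)) t * poly (P m) t"
proof -
  have "(\<alpha>+1) * ip (P (Suc m)) (P m) + ip (P (Suc m)) (pCons 0 (pderiv (P m))) + ip (P m) (pCons 0 (pderiv (P (Suc m))))
      - ip (pCons 0 (P (Suc m))) (P m) = - (c * t * poly (P (Suc m)) t * poly (P m) t)" by (rule IBP2)
  moreover have "ip (P (Suc m)) (P m) = 0" by (simp add: ip_orth)
  moreover have "ip (P (Suc m)) (pCons 0 (pderiv (P m))) = 0" by (simp add: K4)
  moreover have "ip (pCons 0 (P (Suc m))) (P m) = h (Suc m)" by (simp add: ip_X K2)
  ultimately show ?thesis by (simp add: E_def)
qed

lemma E_rec: "E (Suc n) = a n * h n + b n * E n"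
proof -
  have hn: "h n > 0" by (rule h_pos)
  have d: "P n + pCons 0 (pderiv (P n)) = pderiv (P (Suc n)) + smult (a n) (pderiv (P n)) + smult (b n) (pderiv (P (n - 1)))"
    using arg_cong[OF recur[of n], of pderiv] by (simp add: pderiv_pCons pderiv_add pderiv_smult)
  have "ip (P n) (pCons 0 (P n + pCons 0 (pderiv (P n)))) = ip (P n) (pCons 0 (pderiv (P (Suc n)) + smult (a n) (pderiv (P n)) + smult (b n) (pderiv (P (n - 1)))))"
    by (simp only: d)
  moreover have "ip (P n) (pCons 0 (P n + pCons 0 (pderiv (P n)))) = a n * h n + ip (pCons 0 (P n)) (pCons 0 (pderiv (P n)))"
  proof -
    have t: "ip (P n) (pCons 0 (P n)) = a n * h n" using hn by (simp add: a_def ip_comm)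
    have e1: "pCons 0 (P n + pCons 0 (pderiv (P n))) = pCons 0 (P n) + pCons 0 (pCons 0 (pderiv (P n)))" by simp
    show ?thesis unfolding e1 ip_add_right ip_X t ..
  qed
  moreover have "ip (pCons 0 (P n)) (pCons 0 (pderiv (P n))) = a n * (real n * h n) + b n * E n"
  proof -
    have "ip (pCons 0 (P n)) (pCons 0 (pderiv (P n))) = ip (P (Suc n)) (pCons 0 (pderiv (P n))) + a n * ip (P n) (pCons 0 (pderiv (P n)))
        + b n * ip (P (n - 1)) (pCons 0 (pderiv (P n)))"
      by (subst recur) (simp add: ip_lin)
    thus ?thesis by (simp add: K4 K1 E_def)
  qed
  moreover have "ip (P n) (pCons 0 (pderiv (P (Suc n)) + smult (a n) (pderiv (P n)) + smult (b n) (pderiv (P (n - 1)))))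
      = E (Suc n) + a n * (real n * h n)"
  proof -
    have z: "b n * ip (P n) (pCons 0 (pderiv (P (n - 1)))) = 0"
      by (cases n) (simp_all add: b_def K4)
    have e2: "pCons 0 (pderiv (P (Suc n)) + smult (a n) (pderiv (P n)) + smult (b n) (pderiv (P (n - 1))))
       = pCons 0 (pderiv (P (Suc n))) + smult (a n) (pCons 0 (pderiv (P n))) + smult (b n) (pCons 0 (pderiv (P (n - 1))))"
      by simp
    show ?thesis unfolding e2 ip_lin K1 z by (simp add: E_def)
  qed
  ultimately show ?thesis by simp
qed

lemma u_rec: "poly (P (Suc n)) t = (t - a n) * poly (P n) t - b n * poly (P (n - 1)) t"
  using arg_cong[OF recur[of n], of "\<lambda>p. poly p t"] by (simp add: algebra_simps)

end



lemma step_alg: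
  fixes \<beta> R X r k nn \<alpha> t m r' Y \<beta>' :: real
  assumes "k = 2*nn+1+\<alpha>" "m = t - k - t*R" "r' = m*R - r" "Y = m^2*R - 2*m*r + X"
    "\<beta>' - t*r' = \<beta> - t*r + (k + t*R)" "\<beta> - \<beta>*R - X = nn*(nn+\<alpha>) + (2*nn+\<alpha>)*r"
  shows "\<beta>' - \<beta>'*R - \<beta>'*R + \<beta>'*R - Y = (nn+1)*(nn+1+\<alpha>) + (2*(nn+1)+\<alpha>)*r'"
  using assms by algebra

context OPS begin

definition u where "u n = poly (P n) t"
definition RR where "RR n = c * (u n)^2 / h n"
definition rv where "rv n = (if n = 0 then 0 else c * u n * u (n - 1) / h (n - 1))"
definition Xv where "Xv n = (if n = 0 then 0 else b n * RR (n - 1))"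

lemma S5: "a n = 2 * real n + 1 + \<alpha> + t * RR n"
  using a_eq by (simp add: RR_def u_def)

lemma Esum: "E (Suc n) / h n = (\<Sum>j<Suc n. a j)"
proof (induction n)
  case 0
  have "h 0 > 0" by (rule h_pos)
  thus ?case using E_rec[of 0] by (simp add: b_def)
next
  case (Suc n)
  have "h n > 0" "h (Suc n) > 0" by (rule h_pos)+
  hence "E (Suc (Suc n)) / h (Suc n) = a (Suc n) + E (Suc n) / h n"
    using E_rec[of "Suc n"] by (simp add: b_def field_simps)
  thus ?case using Suc by simp
qed

lemma EqA: "b n - t * rv n = (\<Sum>j<n. a j)"
proof (cases n)
  case (Suc m)
  have "h m > 0" "h (Suc m) > 0" by (rule h_pos)+
  hence "E (Suc m) / h m = b (Suc m) - t * rv (Suc m)"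
    using E_eq[of m] by (simp add: b_def rv_def u_def field_simps)
  thus ?thesis using Esum[of m] Suc by simp
qed (simp add: b_def rv_def)

lemma S1: "rv (Suc n) = (t - a n) * RR n - rv n"
proof -
  have hp: "h n > 0" "h (n - 1) > 0" by (rule h_pos)+
  have "rv (Suc n) = c * ((t - a n) * u n - b n * u (n - 1)) * u n / h n"
    by (simp add: rv_def u_def u_rec)
  also have "\<dots> = (t - a n) * RR n - rv n"
    using hp by (cases n) (simp_all add: RR_def rv_def b_def field_simps power2_eq_square)
  finally show ?thesis .
qed

lemma S2: "b (Suc n) * RR (Suc n) = (t - a n)^2 * RR n - 2 * (t - a n) * rv n + Xv n"
proof -
  have hp: "h n > 0" "h (n - 1) > 0" "h (Suc n) > 0" by (rule h_pos)+
  have "b (Suc n) * RR (Suc n) = c * ((t - a n) * u n - b n * u (n - 1))^2 / h n"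
    using hp by (simp add: b_def RR_def u_def u_rec)
  also have "\<dots> = (t - a n)^2 * RR n - 2 * (t - a n) * rv n + Xv n"
    using hp by (cases n) (simp_all add: RR_def rv_def b_def Xv_def field_simps power2_eq_square)
  finally show ?thesis .
qed

lemma Inv: "b n - b n * RR n - Xv n = real n * (real n + \<alpha>) + (2 * real n + \<alpha>) * rv n"
proof (induction n)
  case 0 thus ?case by (simp add: b_def Xv_def rv_def)
next
  case (Suc n)
  have A: "b (Suc n) - t * rv (Suc n) = b n - t * rv n + a n"
    using EqA[of n] EqA[of "Suc n"] by simp
  have X: "Xv (Suc n) = b (Suc n) * RR n" by (simp add: Xv_def)
  have "b (Suc n) - b (Suc n) * RR n - b (Suc n) * RR n + b (Suc n) * RR n - b (Suc n) * RR (Suc n)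
      = (real n + 1) * (real n + 1 + \<alpha>) + (2 * (real n + 1) + \<alpha>) * rv (Suc n)"
    by (rule step_alg[where k = "2 * real n + 1 + \<alpha>" and m = "t - a n" and r = "rv n" and X = "Xv n" and \<beta> = "b n"])
       (use S5[of n] S1[of n] S2[of n] A Suc.IH in auto)
  thus ?case using X by (simp add: algebra_simps)
qed

lemma sumA: "(\<Sum>j<n. a j) = real n ^ 2 + real n * \<alpha> + t * (\<Sum>j<n. RR j)"
  by (induction n) (simp_all add: S5 algebra_simps power2_eq_square)

end



theorem lemma7:
  fixes \<alpha> A B t :: real and P :: "nat \<Rightarrow> real poly"
    and h \<beta> R r :: "nat \<Rightarrow> real" and n :: nat
  assumes "\<alpha> > 0" "A \<ge> 0" "B > 0" "t > 0"
    and "monic_OP (jw \<alpha> A B t) P"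
    and "\<And>k. h k = hnorm (jw \<alpha> A B t) P k"
    and "\<And>k. \<beta> k = h k / h (k - 1)"
    and "\<And>k. R k = B * t powr \<alpha> * exp (- t) * (poly (P k) t)\<^sup>2 / h k"
    and "\<And>k. r k = B * t powr \<alpha> * exp (- t) * poly (P k) t * poly (P (k - 1)) t / h (k - 1)"
    and "n \<ge> 1"
  shows "(r n)\<^sup>2 = \<beta> n * R n * R (n - 1) \<and>
    (real n + r n) * (real n + \<alpha> + r n) = \<beta> n * (1 - R n) * (1 - R (n - 1)) \<and>
    (\<Sum>j<n. R j) + r n * (1 - \<alpha> / t - 2 * (real n + r n) / t)
           = \<beta> n / t * ((1 - R n) * R (n - 1) + (1 - R (n - 1)) * R n)"
proof -
  interpret O: OPS \<alpha> A B t P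
  proof
    show "\<And>n. degree (P n) = n" "\<And>n. lead_coeff (P n) = 1"
      using assms(5) unfolding monic_OP_def by blast+
    show "\<And>m n. m \<noteq> n \<Longrightarrow> Lp \<alpha> A B t (P m * P n) = 0"
      using assms(5) by (auto simp: monic_OP_def Lp_def)
  qed (use assms in auto)
  have hk: "h k = O.h k" for k
    using assms(6) by (simp add: hnorm_def O.h_def O.ip_def Lp_def power2_eq_square)
  have Rk: "R k = O.RR k" for k
    using assms(8) by (simp add: O.RR_def O.c_def O.u_def hk)
  obtain m where m: "n = Suc m" using assms(10) by (cases n) auto
  have rn: "r n = O.rv n" using assms(9) m by (simp add: O.rv_def O.c_def O.u_def hk)
  have bn: "\<beta> n = O.b n" using assms(7) m by (simp add: O.b_def hk)
  have hp: "O.h n > 0" "O.h m > 0" by (rule O.h_pos)+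
  have c1: "(r n)\<^sup>2 = \<beta> n * R n * R (n - 1)"
    unfolding rn bn Rk using hp m by (simp add: O.rv_def O.b_def O.RR_def field_simps power2_eq_square)
  have inv: "\<beta> n - \<beta> n * R n - \<beta> n * R (n - 1) = real n * (real n + \<alpha>) + (2 * real n + \<alpha>) * r n"
    using O.Inv[of n] m unfolding rn bn Rk by (simp add: O.Xv_def)
  have c2: "(real n + r n) * (real n + \<alpha> + r n) = \<beta> n * (1 - R n) * (1 - R (n - 1))"
    using c1 inv by algebra
  have eqa: "\<beta> n - t * r n = real n ^ 2 + real n * \<alpha> + t * (\<Sum>j<n. R j)"
    using O.EqA[of n] O.sumA[of n] unfolding rn bn Rk by simp
  have c3': "t * (\<Sum>j<n. R j) + r n * (t - \<alpha> - 2 * (real n + r n))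
       = \<beta> n * ((1 - R n) * R (n - 1) + (1 - R (n - 1)) * R n)"
    using c1 inv eqa by algebra
  have c3: "(\<Sum>j<n. R j) + r n * (1 - \<alpha> / t - 2 * (real n + r n) / t)
           = \<beta> n / t * ((1 - R n) * R (n - 1) + (1 - R (n - 1)) * R n)"
  proof -
    have e1: "(\<Sum>j<n. R j) + r n * (1 - \<alpha> / t - 2 * (real n + r n) / t)
        = (t * (\<Sum>j<n. R j) + r n * (t - \<alpha> - 2 * (real n + r n))) / t"
      using assms(4) by (simp add: field_simps)
    have e2: "\<beta> n / t * ((1 - R n) * R (n - 1) + (1 - R (n - 1)) * R n)
        = \<beta> n * ((1 - R n) * R (n - 1) + (1 - R (n - 1)) * R n) / t" by simp
    show ?thesis unfolding e1 e2 c3' ..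
  qed
  show ?thesis using c1 c2 c3 by blast
qed



end
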